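(* Consider the continuous-time (i.e., $N\to\infty$) version of the NOMA Pareto-boundary problem: maximize $R\in\mathbb{R}$ over policies $\{\mathbf{\Theta}(t),\mu(t),p_k(t)\}_{t\in[0,T]}$ subject to: for all $t$, $\mathbf{\Theta}(t)\in\mathcal{S}$; $p_k(t)\ge 0$ for all $k$ and $\sum_{k=1}^K p_k(t)\le P_{\max}$; $\mu(t)$ is a decoding order (a permutation $(\mu_1(t),\dots,\mu_K(t))$ of $\{1,\dots,K\}$) such that $|h_k+\mathbf{g}_k^H\mathbf{\Theta}(t)\mathbf{v}|^2\ge |h_j+\mathbf{g}_j^H\mathbf{\Theta}(t)\mathbf{v}|^2$ whenever $\mu_j(t)<\mu_k(t)$; and the rate-profile constraints $\frac{1}{T}\int_0^T R_k(t)\,dt\ge \alpha_k R$ for all $k$, where $$R_k(t)=\log_2\left(1+\frac{|h_k+\mathbf{g}_k^H\mathbf{\Theta}(t)\mathbf{v}|^2p_k(t)}{\sum_{i:\,\mu_i(t)>\mu_k(t)}|h_k+\mathbf{g}_k^H\mathbf{\Theta}(t)\mathbf{v}|^2p_i(t)+\sigma^2}\right).$$ This problem satisfies the time-sharing condition: for any two policies $x$ and $y$ that are optimal (feasible) for this problem with rate-profile constraints satisfied at values $R_x$ and $R_y$ respectively (i.e., $\frac1T\int_0^T R_{k,x}(t)dt\ge\alpha_kR_x$ and $\frac1T\int_0^T R_{k,y}(t)dt\ge\alpha_kR_y$ for all $k$), and any $\nu\in[0,1]$, there exists a policy $z$ satisfying all the per-time constraints above such that $\frac{1}{T}\int_0^T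 R_{k,z}(t)\,dt\ge \alpha_k\big(\nu R_x+(1-\nu)R_y\big)$ for all $k$ (equivalently, $z$ attains value at least $\nu R_x+(1-\nu)R_y$).
   Context: Setting: an access point (single antenna) serves $K$ single-antenna users with the help of an intelligent reflecting surface with $M$ sub-surfaces. $h_k\in\mathbb{C}$ is the AP–user $k$ channel, $\mathbf{v}\in\mathbb{C}^{M}$ the AP–IRS channel, $\mathbf{g}_k\in\mathbb{C}^{M}$ the IRS–user $k$ channel. $\mathcal{S}$ is the (finite) set of diagonal matrices $\mathbf{\Theta}=\mathrm{diag}(e^{j\theta_1},\dots,e^{j\theta_M})$ with each $\theta_m\in\{2\pi n/L: n=0,\dots,L-1\}$, $L=2^b$ for a positive integer $b$. $\sigma^2>0$ is the noise power, $P_{\max}>0$ the power budget, $T>0$ the block duration. The rate-profile vector $\boldsymbol{\alpha}=(\alpha_1,\dots,\alpha_K)$ satisfies $\alpha_k\ge0$ and $\sum_k\alpha_k=1$. Policies are (measurable) functions of $t\in[0,T]$. *)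

theory Defs
  imports "HOL-Analysis.Analysis"
begin

text \<open>Users are indexed by 1..K, IRS sub-surfaces by 1..M.
  An IRS configuration Theta = diag(e^{j theta_1},...,e^{j theta_M}) is represented by its
  diagonal, a function nat => complex (only the entries 1..M are relevant).\<close>

definition phase_set :: "nat \<Rightarrow> real set" where
  "phase_set L = {2 * pi * real n / real L | n. n < L}"

definition IRS_set :: "nat \<Rightarrow> nat \<Rightarrow> (nat \<Rightarrow> complex) set" where
  "IRS_set M L = {\<Theta>. \<forall>m\<in>{1..M}. \<exists>\<theta>\<in>phase_set L. \<Theta> m = cis \<theta>}"

definition eff_gain ::
  "(nat \<Rightarrow> complex) \<Rightarrow> (nat \<Rightarrow> nat \<Rightarrow> complex) \<Rightarrow> (nat \<Rightarrow> complex) \<Rightarrow> nat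
    \<Rightarrow> (nat \<Rightarrow> complex) \<Rightarrow> nat \<Rightarrow> real" where
  "eff_gain h g v M \<Theta> k = (cmod (h k + (\<Sum>m=1..M. cnj (g k m) * \<Theta> m * v m)))\<^sup>2"

definition decoding_order :: "nat \<Rightarrow> (nat \<Rightarrow> real) \<Rightarrow> (nat \<Rightarrow> nat) \<Rightarrow> bool" where
  "decoding_order K gain \<mu> \<longleftrightarrow> bij_betw \<mu> {1..K} {1..K} \<and>
     (\<forall>j\<in>{1..K}. \<forall>k\<in>{1..K}. \<mu> j < \<mu> k \<longrightarrow> gain j \<le> gain k)"

definition inst_rate ::
  "(nat \<Rightarrow> complex) \<Rightarrow> (nat \<Rightarrow> nat \<Rightarrow> complex) \<Rightarrow> (nat \<Rightarrow> complex) \<Rightarrow> nat \<Rightarrow> nat \<Rightarrow> real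
    \<Rightarrow> (nat \<Rightarrow> complex) \<Rightarrow> (nat \<Rightarrow> nat) \<Rightarrow> (nat \<Rightarrow> real) \<Rightarrow> nat \<Rightarrow> real" where
  "inst_rate h g v M K \<sigma>2 \<Theta> \<mu> p k =
     log 2 (1 + eff_gain h g v M \<Theta> k * p k /
       ((\<Sum>i\<in>{i\<in>{1..K}. \<mu> i > \<mu> k}. eff_gain h g v M \<Theta> k * p i) + \<sigma>2))"

definition pointwise_feasible ::
  "(nat \<Rightarrow> complex) \<Rightarrow> (nat \<Rightarrow> nat \<Rightarrow> complex) \<Rightarrow> (nat \<Rightarrow> complex) \<Rightarrow> nat \<Rightarrow> nat \<Rightarrow> nat
    \<Rightarrow> real \<Rightarrow> (nat \<Rightarrow> complex) \<Rightarrow> (nat \<Rightarrow> nat) \<Rightarrow> (nat \<Rightarrow> real) \<Rightarrow> bool" where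
  "pointwise_feasible h g v M K L Pmax \<Theta> \<mu> p \<longleftrightarrow>
     \<Theta> \<in> IRS_set M L \<and> (\<forall>k\<in>{1..K}. 0 \<le> p k) \<and> (\<Sum>k=1..K. p k) \<le> Pmax \<and>
     decoding_order K (eff_gain h g v M \<Theta>) \<mu>"

definition admissible_policy ::
  "(nat \<Rightarrow> complex) \<Rightarrow> (nat \<Rightarrow> nat \<Rightarrow> complex) \<Rightarrow> (nat \<Rightarrow> complex) \<Rightarrow> nat \<Rightarrow> nat \<Rightarrow> nat
    \<Rightarrow> real \<Rightarrow> real \<Rightarrow> (real \<Rightarrow> nat \<Rightarrow> complex) \<Rightarrow> (real \<Rightarrow> nat \<Rightarrow> nat) \<Rightarrow> (real \<Rightarrow> nat \<Rightarrow> real)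
    \<Rightarrow> bool" where
  "admissible_policy h g v M K L Pmax T \<Theta> \<mu> p \<longleftrightarrow>
     (\<forall>m. (\<lambda>t. \<Theta> t m) \<in> borel_measurable lborel) \<and>
     (\<forall>k. (\<lambda>t. \<mu> t k) \<in> measurable lborel (count_space UNIV)) \<and>
     (\<forall>k. (\<lambda>t. p t k) \<in> borel_measurable lborel) \<and>
     (\<forall>t\<in>{0..T}. pointwise_feasible h g v M K L Pmax (\<Theta> t) (\<mu> t) (p t))"

definition avg_rate ::
  "(nat \<Rightarrow> complex) \<Rightarrow> (nat \<Rightarrow> nat \<Rightarrow> complex) \<Rightarrow> (nat \<Rightarrow> complex) \<Rightarrow> nat \<Rightarrow> nat \<Rightarrow> real
    \<Rightarrow> real \<Rightarrow> (real \<Rightarrow> nat \<Rightarrow> complex) \<Rightarrow> (real \<Rightarrow> nat \<Rightarrow> nat) \<Rightarrow> (real \<Rightarrow> nat \<Rightarrow> real)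
    \<Rightarrow> nat \<Rightarrow> real" where
  "avg_rate h g v M K \<sigma>2 T \<Theta> \<mu> p k =
     (1 / T) * (LINT t:{0..T}|lborel. inst_rate h g v M K \<sigma>2 (\<Theta> t) (\<mu> t) (p t) k)"

end

theory Submission
  imports Defs
begin
lemma rate_meas:
  assumes "admissible_policy h g v M K L Pmax T \<Theta> \<mu> p"
  shows "(\<lambda>t. inst_rate h g v M K \<sigma>2 (\<Theta> t) (\<mu> t) (p t) k) \<in> borel_measurable lborel"
proof -
  have [measurable]: "\<And>m. (\<lambda>t. \<Theta> t m) \<in> borel_measurable lborel"
    "\<And>k. (\<lambda>t. \<mu> t k) \<in> measurable lborel (count_space UNIV)"
    "\<And>k. (\<lambda>t. p t k) \<in> borel_measurable lborel"
    using assms unfolding admissible_policy_def by auto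
  have e: "(\<lambda>t. eff_gain h g v M (\<Theta> t) k) \<in> borel_measurable lborel"
    unfolding eff_gain_def by measurable
  have eq: "\<And>t. (\<Sum>i\<in>{i\<in>{1..K}. \<mu> t i > \<mu> t k}. eff_gain h g v M (\<Theta> t) k * p t i)
     = (\<Sum>i\<in>{1..K}. if \<mu> t k < \<mu> t i then eff_gain h g v M (\<Theta> t) k * p t i else 0)"
    by (subst sum.inter_filter) auto
  have [measurable]: "\<And>i. Measurable.pred lborel (\<lambda>t. \<mu> t k < \<mu> t i)"
  proof -
    fix i
    have "\<And>a. Measurable.pred lborel (\<lambda>t. a < \<mu> t i)"
      by (rule measurable_compose_countable[where f="\<lambda>b t. _ < b" and g="\<lambda>t. \<mu> t i"]) auto
    then show "Measurable.pred lborel (\<lambda>t. \<mu> t k < \<mu> t i)"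
      by (rule measurable_compose_countable[where f="\<lambda>a t. a < \<mu> t i" and g="\<lambda>t. \<mu> t k"]) auto
  qed
  show ?thesis unfolding inst_rate_def eq using e by measurable
qed

lemma gain_bound:
  assumes "\<Theta> \<in> IRS_set M L"
  shows "eff_gain h g v M \<Theta> k \<le> (cmod (h k) + (\<Sum>m=1..M. cmod (g k m) * cmod (v m)))\<^sup>2"
proof -
  have "cmod (h k + (\<Sum>m=1..M. cnj (g k m) * \<Theta> m * v m)) \<le> cmod (h k) + cmod (\<Sum>m=1..M. cnj (g k m) * \<Theta> m * v m)"
    by (rule norm_triangle_ineq)
  also have "cmod (\<Sum>m=1..M. cnj (g k m) * \<Theta> m * v m) \<le> (\<Sum>m=1..M. cmod (cnj (g k m) * \<Theta> m * v m))"
    by (rule norm_sum)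
  also have "(\<Sum>m=1..M. cmod (cnj (g k m) * \<Theta> m * v m)) = (\<Sum>m=1..M. cmod (g k m) * cmod (v m))"
  proof (rule sum.cong)
    fix m assume "m \<in> {1..M}"
    then obtain th where "\<Theta> m = cis th" using assms unfolding IRS_set_def by blast
    then show "cmod (cnj (g k m) * \<Theta> m * v m) = cmod (g k m) * cmod (v m)"
      by (simp add: norm_mult)
  qed simp
  finally have "cmod (h k + (\<Sum>m=1..M. cnj (g k m) * \<Theta> m * v m)) \<le> cmod (h k) + (\<Sum>m=1..M. cmod (g k m) * cmod (v m))"
    by simp
  then show ?thesis unfolding eff_gain_def by (intro power_mono) auto
qed

lemma rate_bound:
  assumes "pointwise_feasible h g v M K L Pmax \<Theta> \<mu> p" "0 < \<sigma>2" "k \<in> {1..K}"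
  shows "norm (inst_rate h g v M K \<sigma>2 \<Theta> \<mu> p k) \<le>
     log 2 (1 + (cmod (h k) + (\<Sum>m=1..M. cmod (g k m) * cmod (v m)))\<^sup>2 * Pmax / \<sigma>2)"
proof -
  define G where "G = (cmod (h k) + (\<Sum>m=1..M. cmod (g k m) * cmod (v m)))\<^sup>2"
  define e where "e = eff_gain h g v M \<Theta> k"
  define S where "S = (\<Sum>i\<in>{i\<in>{1..K}. \<mu> i > \<mu> k}. e * p i)"
  have pos: "\<forall>k\<in>{1..K}. 0 \<le> p k" and sumP: "(\<Sum>k=1..K. p k) \<le> Pmax"
    and irs: "\<Theta> \<in> IRS_set M L"
    using assms(1) unfolding pointwise_feasible_def by auto
  have e0: "0 \<le> e" unfolding e_def eff_gain_def by simp
  have eG: "e \<le> G" unfolding e_def G_def by (rule gain_bound[OF irs])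
  have S0: "0 \<le> S" unfolding S_def using pos e0 by (intro sum_nonneg) auto
  have pk: "p k \<le> Pmax"
    using member_le_sum[of k "{1..K}" p] pos assms(3) sumP by fastforce
  have pk0: "0 \<le> p k" using pos assms(3) by auto
  have a0: "0 \<le> e * p k / (S + \<sigma>2)" using e0 pk0 S0 assms(2) by simp
  have "e * p k \<le> G * Pmax" using e0 eG pk pk0 by (intro mult_mono) auto
  then have a1: "e * p k / (S + \<sigma>2) \<le> G * Pmax / \<sigma>2"
    using S0 assms(2) e0 pk0 by (intro frac_le) (auto intro: order_trans[OF mult_nonneg_nonneg])
  have r: "inst_rate h g v M K \<sigma>2 \<Theta> \<mu> p k = log 2 (1 + e * p k / (S + \<sigma>2))"
    unfolding inst_rate_def e_def S_def by simp
  have "0 \<le> log 2 (1 + e * p k / (S + \<sigma>2))" using a0 by simp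
  moreover have "log 2 (1 + e * p k / (S + \<sigma>2)) \<le> log 2 (1 + G * Pmax / \<sigma>2)"
    using a0 a1 by simp
  ultimately show ?thesis unfolding r G_def by simp
qed

lemma rate_integrable:
  assumes "admissible_policy h g v M K L Pmax T \<Theta> \<mu> p" "0 < \<sigma>2" "k \<in> {1..K}"
  shows "set_integrable lborel {0..T} (\<lambda>t. inst_rate h g v M K \<sigma>2 (\<Theta> t) (\<mu> t) (p t) k)"
  unfolding set_integrable_def
proof (rule integrableI_bounded_set_indicator)
  show "(\<lambda>t. inst_rate h g v M K \<sigma>2 (\<Theta> t) (\<mu> t) (p t) k) \<in> borel_measurable lborel"
    by (rule rate_meas[OF assms(1)])
  show "AE x in lborel. x \<in> {0..T} \<longrightarrow> norm (inst_rate h g v M K \<sigma>2 (\<Theta> x) (\<mu> x) (p x) k) \<le>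
     log 2 (1 + (cmod (h k) + (\<Sum>m=1..M. cmod (g k m) * cmod (v m)))\<^sup>2 * Pmax / \<sigma>2)"
    using assms rate_bound unfolding admissible_policy_def by blast
qed (auto simp: emeasure_lborel_Icc_eq)

lemma timeshare_integral:
  fixes rx ry :: "real \<Rightarrow> real"
  assumes hx: "(rx has_integral Ix) {0..T}" and hy: "(ry has_integral Iy) {0..T}"
    and "0 < \<nu>" "\<nu> < 1" "0 < T"
  shows "((\<lambda>t. if t \<le> \<nu>*T then rx (t/\<nu>) else ry ((t - \<nu>*T)/(1-\<nu>))) has_integral (\<nu>*Ix + (1-\<nu>)*Iy)) {0..T}"
proof -
  have hx': "((\<lambda>x. rx ((1/\<nu>) *\<^sub>R x + 0)) has_integral (Ix /\<^sub>R (1/\<nu>) ^ DIM(real)))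
           (cbox ((0 - 0) /\<^sub>R (1/\<nu>)) ((T - 0) /\<^sub>R (1/\<nu>)))"
    using hx assms by (intro has_integral_affinity') auto
  have hx2: "((\<lambda>t. rx (t/\<nu>)) has_integral (\<nu>*Ix)) {0..\<nu>*T}"
    using hx' by (simp add: mult.commute)
  have hy': "((\<lambda>x. ry ((1/(1-\<nu>)) *\<^sub>R x + (-(\<nu>*T)/(1-\<nu>)))) has_integral (Iy /\<^sub>R (1/(1-\<nu>)) ^ DIM(real)))
           (cbox ((0 - (-(\<nu>*T)/(1-\<nu>))) /\<^sub>R (1/(1-\<nu>))) ((T - (-(\<nu>*T)/(1-\<nu>))) /\<^sub>R (1/(1-\<nu>))))"
    using hy assms by (intro has_integral_affinity') auto
  have e1: "(0 - (-(\<nu>*T)/(1-\<nu>))) /\<^sub>R (1/(1-\<nu>)) = \<nu>*T" using assms by (simp add: field_simps)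
  have e2: "(T - (-(\<nu>*T)/(1-\<nu>))) /\<^sub>R (1/(1-\<nu>)) = T" using assms by (simp add: field_simps)
  have e3: "\<And>x. (1/(1-\<nu>)) *\<^sub>R x + (-(\<nu>*T)/(1-\<nu>)) = (x - \<nu>*T)/(1-\<nu>)"
    by (simp add: diff_divide_distrib)
  have hy2: "((\<lambda>t. ry ((t - \<nu>*T)/(1-\<nu>))) has_integral ((1-\<nu>)*Iy)) {\<nu>*T..T}"
    using hy' unfolding e1 e2 e3 by (simp add: mult.commute)
  have A: "((\<lambda>t. if t \<le> \<nu>*T then rx (t/\<nu>) else ry ((t - \<nu>*T)/(1-\<nu>))) has_integral (\<nu>*Ix)) {0..\<nu>*T}"
    by (rule has_integral_spike_finite[OF _ _ hx2, of "{}"]) auto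
  have B: "((\<lambda>t. if t \<le> \<nu>*T then rx (t/\<nu>) else ry ((t - \<nu>*T)/(1-\<nu>))) has_integral ((1-\<nu>)*Iy)) {\<nu>*T..T}"
    by (rule has_integral_spike_finite[OF _ _ hy2, of "{\<nu>*T}"]) auto
  show ?thesis
    using assms by (intro has_integral_combine[OF _ _ A B]) (auto simp: mult_le_cancel_right1)
qed

theorem theorem1:
  fixes h :: "nat \<Rightarrow> complex" and v :: "nat \<Rightarrow> complex" and g :: "nat \<Rightarrow> nat \<Rightarrow> complex"
    and M K b :: nat and \<sigma>2 Pmax T :: real and \<alpha> :: "nat \<Rightarrow> real"
    and \<Theta>x \<Theta>y :: "real \<Rightarrow> nat \<Rightarrow> complex" and \<mu>x \<mu>y :: "real \<Rightarrow> nat \<Rightarrow> nat"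
    and px py :: "real \<Rightarrow> nat \<Rightarrow> real" and Rx Ry \<nu> :: real
  assumes "0 < b" and "0 < \<sigma>2" and "0 < Pmax" and "0 < T"
    and "\<forall>k\<in>{1..K}. 0 \<le> \<alpha> k" and "(\<Sum>k=1..K. \<alpha> k) = 1"
    and "admissible_policy h g v M K (2 ^ b) Pmax T \<Theta>x \<mu>x px"
    and "admissible_policy h g v M K (2 ^ b) Pmax T \<Theta>y \<mu>y py"
    and "\<forall>k\<in>{1..K}. avg_rate h g v M K \<sigma>2 T \<Theta>x \<mu>x px k \<ge> \<alpha> k * Rx"
    and "\<forall>k\<in>{1..K}. avg_rate h g v M K \<sigma>2 T \<Theta>y \<mu>y py k \<ge> \<alpha> k * Ry"
    and "0 \<le> \<nu>" and "\<nu> \<le> 1"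
  shows "\<exists>\<Theta>z \<mu>z pz. admissible_policy h g v M K (2 ^ b) Pmax T \<Theta>z \<mu>z pz \<and>
           (\<forall>k\<in>{1..K}.
              set_integrable lborel {0..T} (\<lambda>t. inst_rate h g v M K \<sigma>2 (\<Theta>z t) (\<mu>z t) (pz t) k) \<and>
              avg_rate h g v M K \<sigma>2 T \<Theta>z \<mu>z pz k \<ge> \<alpha> k * (\<nu> * Rx + (1 - \<nu>) * Ry))"
proof -
  note adx = assms(7) and ady = assms(8)
  let ?r = "\<lambda>\<Theta> \<mu> p k t. inst_rate h g v M K \<sigma>2 (\<Theta> t) (\<mu> t) (p t) k"
  have intx: "\<And>k. k \<in> {1..K} \<Longrightarrow> set_integrable lborel {0..T} (?r \<Theta>x \<mu>x px k)"
    using rate_integrable[OF adx assms(2)] by blast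
  have inty: "\<And>k. k \<in> {1..K} \<Longrightarrow> set_integrable lborel {0..T} (?r \<Theta>y \<mu>y py k)"
    using rate_integrable[OF ady assms(2)] by blast
  consider "\<nu> = 0" | "\<nu> = 1" | "0 < \<nu> \<and> \<nu> < 1" using assms(11,12) by linarith
  then show ?thesis
  proof cases
    case 1
    then show ?thesis using ady inty assms(10) by (intro exI[of _ \<Theta>y] exI[of _ \<mu>y] exI[of _ py]) auto
  next
    case 2
    then show ?thesis using adx intx assms(9) by (intro exI[of _ \<Theta>x] exI[of _ \<mu>x] exI[of _ px]) auto
  next
    case 3
    then have n0: "0 < \<nu>" and n1: "\<nu> < 1" by auto
    define c where "c = \<nu> * T"
    define \<Theta>z where "\<Theta>z = (\<lambda>t. if t \<le> c then \<Theta>x (t/\<nu>) else \<Theta>y ((t - c)/(1-\<nu>)))"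
    define \<mu>z where "\<mu>z = (\<lambda>t. if t \<le> c then \<mu>x (t/\<nu>) else \<mu>y ((t - c)/(1-\<nu>)))"
    define pz where "pz = (\<lambda>t. if t \<le> c then px (t/\<nu>) else py ((t - c)/(1-\<nu>)))"
    have [measurable]: "\<And>m. (\<lambda>t. \<Theta>x t m) \<in> borel_measurable lborel"
      "\<And>k. (\<lambda>t. \<mu>x t k) \<in> measurable lborel (count_space UNIV)"
      "\<And>k. (\<lambda>t. px t k) \<in> borel_measurable lborel"
      "\<And>m. (\<lambda>t. \<Theta>y t m) \<in> borel_measurable lborel"
      "\<And>k. (\<lambda>t. \<mu>y t k) \<in> measurable lborel (count_space UNIV)"
      "\<And>k. (\<lambda>t. py t k) \<in> borel_measurable lborel"
      using adx ady unfolding admissible_policy_def by auto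
    have ff: "(\<lambda>t::real. t/\<nu>) \<in> borel_measurable lborel" "(\<lambda>t::real. (t - c)/(1-\<nu>)) \<in> borel_measurable lborel"
      by auto
    have m1: "\<And>m. (\<lambda>t. \<Theta>z t m) \<in> borel_measurable lborel"
    proof -
      fix m
      have "(\<lambda>t. \<Theta>x (t/\<nu>) m) \<in> borel_measurable lborel"
        using measurable_compose[OF ff(1), of "\<lambda>s. \<Theta>x s m" borel] by simp
      moreover have "(\<lambda>t. \<Theta>y ((t - c)/(1-\<nu>)) m) \<in> borel_measurable lborel"
        using measurable_compose[OF ff(2), of "\<lambda>s. \<Theta>y s m" borel] by simp
      ultimately show "(\<lambda>t. \<Theta>z t m) \<in> borel_measurable lborel"
        unfolding \<Theta>z_def by (subst if_distrib[of "\<lambda>f. f m"]) measurable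
    qed
    have m2: "\<And>k. (\<lambda>t. \<mu>z t k) \<in> measurable lborel (count_space UNIV)"
    proof -
      fix k
      have [measurable]: "(\<lambda>t. \<mu>x (t/\<nu>) k) \<in> measurable lborel (count_space UNIV)"
        using measurable_compose[OF ff(1), of "\<lambda>s. \<mu>x s k" borel] by simp
      have [measurable]: "(\<lambda>t. \<mu>y ((t - c)/(1-\<nu>)) k) \<in> measurable lborel (count_space UNIV)"
        using measurable_compose[OF ff(2), of "\<lambda>s. \<mu>y s k" borel] by simp
      show "(\<lambda>t. \<mu>z t k) \<in> measurable lborel (count_space UNIV)"
        unfolding \<mu>z_def by (subst if_distrib[of "\<lambda>f. f k"]) measurable
    qed
    have m3: "\<And>k. (\<lambda>t. pz t k) \<in> borel_measurable lborel"
    proof -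
      fix k
      have "(\<lambda>t. px (t/\<nu>) k) \<in> borel_measurable lborel"
        using measurable_compose[OF ff(1), of "\<lambda>s. px s k" borel] by simp
      moreover have "(\<lambda>t. py ((t - c)/(1-\<nu>)) k) \<in> borel_measurable lborel"
        using measurable_compose[OF ff(2), of "\<lambda>s. py s k" borel] by simp
      ultimately show "(\<lambda>t. pz t k) \<in> borel_measurable lborel"
        unfolding pz_def by (subst if_distrib[of "\<lambda>f. f k"]) measurable
    qed
    have pw: "\<forall>t\<in>{0..T}. pointwise_feasible h g v M K (2 ^ b) Pmax (\<Theta>z t) (\<mu>z t) (pz t)"
    proof
      fix t assume t: "t \<in> {0..T}"
      show "pointwise_feasible h g v M K (2 ^ b) Pmax (\<Theta>z t) (\<mu>z t) (pz t)"
      proof (cases "t \<le> c")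
        case True
        have "t / \<nu> \<in> {0..T}" using t True n0 unfolding c_def by (auto simp: field_simps)
        then show ?thesis using adx True unfolding admissible_policy_def \<Theta>z_def \<mu>z_def pz_def by auto
      next
        case False
        have "(t - c) / (1 - \<nu>) \<in> {0..T}" using t False n1 unfolding c_def
          by (auto simp: field_simps)
        then show ?thesis using ady False unfolding admissible_policy_def \<Theta>z_def \<mu>z_def pz_def by auto
      qed
    qed
    have adz: "admissible_policy h g v M K (2 ^ b) Pmax T \<Theta>z \<mu>z pz"
      unfolding admissible_policy_def using m1 m2 m3 pw by blast
    have intz: "\<And>k. k \<in> {1..K} \<Longrightarrow> set_integrable lborel {0..T} (?r \<Theta>z \<mu>z pz k)"
      using rate_integrable[OF adz assms(2)] by blast
    show ?thesis
    proof (intro exI conjI ballI)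
      show "admissible_policy h g v M K (2 ^ b) Pmax T \<Theta>z \<mu>z pz" by (rule adz)
      fix k assume k: "k \<in> {1..K}"
      show "set_integrable lborel {0..T} (?r \<Theta>z \<mu>z pz k)" using intz[OF k] .
      define Ix where "Ix = (LINT t:{0..T}|lborel. ?r \<Theta>x \<mu>x px k t)"
      define Iy where "Iy = (LINT t:{0..T}|lborel. ?r \<Theta>y \<mu>y py k t)"
      have hx: "(?r \<Theta>x \<mu>x px k has_integral Ix) {0..T}"
        using set_borel_integral_eq_integral[OF intx[OF k]] unfolding Ix_def
        by (simp add: has_integral_integral)
      have hy: "(?r \<Theta>y \<mu>y py k has_integral Iy) {0..T}"
        using set_borel_integral_eq_integral[OF inty[OF k]] unfolding Iy_def
        by (simp add: has_integral_integral)
      have req: "?r \<Theta>z \<mu>z pz k = (\<lambda>t. if t \<le> \<nu>*T then ?r \<Theta>x \<mu>x px k (t/\<nu>) else ?r \<Theta>y \<mu>y py k ((t - \<nu>*T)/(1-\<nu>)))"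
        unfolding \<Theta>z_def \<mu>z_def pz_def c_def by (rule ext) auto
      have hz: "(?r \<Theta>z \<mu>z pz k has_integral (\<nu>*Ix + (1-\<nu>)*Iy)) {0..T}"
        unfolding req by (rule timeshare_integral[OF hx hy n0 n1 assms(4)])
      have "(LINT t:{0..T}|lborel. ?r \<Theta>z \<mu>z pz k t) = \<nu>*Ix + (1-\<nu>)*Iy"
        using set_borel_integral_eq_integral(2)[OF intz[OF k]] hz by (simp add: integral_unique)
      note eqz = this
      have az: "avg_rate h g v M K \<sigma>2 T \<Theta>z \<mu>z pz k
          = \<nu> * avg_rate h g v M K \<sigma>2 T \<Theta>x \<mu>x px k + (1-\<nu>) * avg_rate h g v M K \<sigma>2 T \<Theta>y \<mu>y py k"
        by (simp only: avg_rate_def eqz Ix_def[symmetric] Iy_def[symmetric]) (simp add: algebra_simps diff_divide_distrib)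
      have "\<nu> * (\<alpha> k * Rx) \<le> \<nu> * avg_rate h g v M K \<sigma>2 T \<Theta>x \<mu>x px k"
        using assms(9) k n0 by (intro mult_left_mono) auto
      moreover have "(1-\<nu>) * (\<alpha> k * Ry) \<le> (1-\<nu>) * avg_rate h g v M K \<sigma>2 T \<Theta>y \<mu>y py k"
        using assms(10) k n1 by (intro mult_left_mono) auto
      ultimately show "avg_rate h g v M K \<sigma>2 T \<Theta>z \<mu>z pz k \<ge> \<alpha> k * (\<nu> * Rx + (1 - \<nu>) * Ry)"
        unfolding az by (simp add: algebra_simps)
    qed
  qed
qed

end
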